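(* Let $n_x,n_v,N\ge 1$, $\Delta t,\Delta x,\Delta v,w>0$, velocities $v_1,\dots,v_{n_v}\in\mathbb{R}$, a matrix $\mathsf{C}\in\mathbb{R}^{n_x\times n_x}$, an initial state $\mathsf{f}^0\in\mathbb{R}^{n_x\times n_v}$ and a target $\mathsf{f}^{\mathrm{eq}}\in\mathbb{R}^{n_x\times n_v}$. All indices are periodic (modulo $n_x$ in the first, modulo $n_v$ in the second index). For $\mathsf{H}\in\mathbb{R}^{n_x}$ define the forward scheme, for $n=0,\dots,N-1$: (i) $\mathsf{f}^{n,\star}_{:,j}=S_{-v_j\Delta t/(2\Delta x)}\,\mathsf{f}^n_{:,j}$ for each $j$; (ii) $\mathsf{E}^{n,\star}=\mathsf{C}(\mathbf{1}-\rho^{n,\star})$ with $\rho^{n,\star}_i=w\sum_j\mathsf{f}^{n,\star}_{ij}$, and $\sigma^n_i=(\mathsf{E}^{n,\star}_i+\mathsf{H}_i)\Delta t/\Delta v$; (iii) $\mathsf{f}^{n,\star\star}_{i,:}=S_{\sigma^n_i}\,\mathsf{f}^{n,\star}_{i,:}$ for each $i$ (acting on the row viewed as a vector in $\mathbb{R}^{n_v}$); (iv) $\mathsf{f}^{n+1}_{:,j}=S_{-v_j\Delta t/(2\Delta x)}\,\mathsf{f}^{n,\star\star}_{:,j}$ for each $j$; and let $\mathsf{J}(\mathsf{H})=\frac{\Delta x\Delta v}{2}\sum_{i,j}|\mathsf{f}^N_{ij}-\mathsf{f}^{\mathrm{eq}}_{ij}|^2$. Define the adjoint recursion: $\mathsf{g}^N=\mathsf{f}^N-\mathsf{f}^{\mathrm{eq}}$,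 and for $n=N-1,\dots,0$: $\mathsf{g}^{n,\star\star}_{:,j}=S_{-v_j\Delta t/(2\Delta x)}^{\top}\mathsf{g}^{n+1}_{:,j}$; $D^n_{ij}=\frac{\Delta t}{\Delta v}\big(\mathsf{f}^{n,\star}_{i,j+\mathrm{n}(\sigma^n_i)+1}-\mathsf{f}^{n,\star}_{i,j+\mathrm{n}(\sigma^n_i)}\big)\mathsf{g}^{n,\star\star}_{ij}$, $d^n_i=\sum_j D^n_{ij}$; $\mathsf{g}^{n,\star}_{kl}=\big(S_{\sigma^n_k}^{\top}\mathsf{g}^{n,\star\star}_{k,:}\big)_l-w\,(\mathsf{C}^{\top}d^n)_k$; $\mathsf{g}^{n}_{:,j}=S_{-v_j\Delta t/(2\Delta x)}^{\top}\mathsf{g}^{n,\star}_{:,j}$. Then, at any $\mathsf{H}$ for which no $\sigma^n_i$ ($0\le n<N$, $1\le i\le n_x$) is an integer, $\mathsf{J}$ is differentiable and $$\frac{\partial\mathsf{J}}{\partial\mathsf{H}_i}=\Delta x\,\Delta v\sum_{n=0}^{N-1}d^n_i,\qquad i=1,\dots,n_x .$$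
   Context: For an integer $m\ge 2$ and $s\in\mathbb{R}$, write $\mathrm{n}(s)=\lfloor s\rfloor$, $\alpha(s)=s-\lfloor s\rfloor$, and let $S_s\in\mathbb{R}^{m\times m}$ be given by $(S_su)_k=(1-\alpha(s))u_{k+\mathrm{n}(s)}+\alpha(s)u_{k+\mathrm{n}(s)+1}$ with indices mod $m$ (here $m=n_x$ for the $x$-steps and $m=n_v$ for the $v$-step). The forward scheme is the Strang-split semi-Lagrangian discretization (half step in $x$, full step in $v$ with the self-consistent field plus external field $\mathsf{H}$, half step in $x$) of the 1D Vlasov–Poisson equation $\partial_tf+v\partial_xf-(H+E[f])\partial_vf=0$; $\mathsf{g}^n,\mathsf{g}^{n,\star},\mathsf{g}^{n,\star\star}$ are the discrete adjoint states (Lagrange multipliers). *)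

theory Defs
  imports "HOL-Analysis.Analysis"
begin

text \<open>Parameters of the discretization. Grid indices are 0-based naturals,
  taken modulo nx (first index) and nv (second index).\<close>

record vpparams =
  nx :: nat
  nv :: nat
  Nt :: nat
  dt :: real
  dx :: real
  dv :: real
  wq :: real
  vel :: "nat \<Rightarrow> real"
  Cm :: "nat \<Rightarrow> nat \<Rightarrow> real"
  finit :: "nat \<Rightarrow> nat \<Rightarrow> real"
  feq :: "nat \<Rightarrow> nat \<Rightarrow> real"

definition idx :: "nat \<Rightarrow> int \<Rightarrow> nat" where
  "idx m z = nat (z mod int m)"

definition shiftS :: "nat \<Rightarrow> real \<Rightarrow> (nat \<Rightarrow> real) \<Rightarrow> nat \<Rightarrow> real" where
  "shiftS m s u k = (1 - frac s) * u (idx m (int k + \<lfloor>s\<rfloor>))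
                    + frac s * u (idx m (int k + \<lfloor>s\<rfloor> + 1))"

definition Smat :: "nat \<Rightarrow> real \<Rightarrow> nat \<Rightarrow> nat \<Rightarrow> real" where
  "Smat m s k l = (if l = idx m (int k + \<lfloor>s\<rfloor>) then 1 - frac s else 0)
                + (if l = idx m (int k + \<lfloor>s\<rfloor> + 1) then frac s else 0)"

definition shiftST :: "nat \<Rightarrow> real \<Rightarrow> (nat \<Rightarrow> real) \<Rightarrow> nat \<Rightarrow> real" where
  "shiftST m s u l = (\<Sum>k<m. Smat m s k l * u k)"

definition xshift :: "vpparams \<Rightarrow> nat \<Rightarrow> real" where
  "xshift P j = - vel P j * dt P / (2 * dx P)"

definition xhalf :: "vpparams \<Rightarrow> (nat \<Rightarrow> nat \<Rightarrow> real) \<Rightarrow> nat \<Rightarrow> nat \<Rightarrow> real" where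
  "xhalf P f i j = shiftS (nx P) (xshift P j) (\<lambda>k. f k j) i"

definition xhalfT :: "vpparams \<Rightarrow> (nat \<Rightarrow> nat \<Rightarrow> real) \<Rightarrow> nat \<Rightarrow> nat \<Rightarrow> real" where
  "xhalfT P g i j = shiftST (nx P) (xshift P j) (\<lambda>k. g k j) i"

definition rho :: "vpparams \<Rightarrow> (nat \<Rightarrow> nat \<Rightarrow> real) \<Rightarrow> nat \<Rightarrow> real" where
  "rho P f i = wq P * (\<Sum>j<nv P. f i j)"

definition Efield :: "vpparams \<Rightarrow> (nat \<Rightarrow> nat \<Rightarrow> real) \<Rightarrow> nat \<Rightarrow> real" where
  "Efield P f i = (\<Sum>k<nx P. Cm P i k * (1 - rho P f k))"

definition sigfun :: "vpparams \<Rightarrow> (nat \<Rightarrow> real) \<Rightarrow> (nat \<Rightarrow> nat \<Rightarrow> real) \<Rightarrow> nat \<Rightarrow> real" where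
  "sigfun P H f i = (Efield P f i + H i) * dt P / dv P"

definition vstep :: "vpparams \<Rightarrow> (nat \<Rightarrow> real) \<Rightarrow> (nat \<Rightarrow> nat \<Rightarrow> real) \<Rightarrow> nat \<Rightarrow> nat \<Rightarrow> real" where
  "vstep P H f i j = shiftS (nv P) (sigfun P H f i) (\<lambda>l. f i l) j"

primrec fwd :: "vpparams \<Rightarrow> (nat \<Rightarrow> real) \<Rightarrow> nat \<Rightarrow> nat \<Rightarrow> nat \<Rightarrow> real" where
  "fwd P H 0 = finit P"
| "fwd P H (Suc n) = xhalf P (vstep P H (xhalf P (fwd P H n)))"

definition fstar :: "vpparams \<Rightarrow> (nat \<Rightarrow> real) \<Rightarrow> nat \<Rightarrow> nat \<Rightarrow> nat \<Rightarrow> real" where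
  "fstar P H n = xhalf P (fwd P H n)"

definition sig :: "vpparams \<Rightarrow> (nat \<Rightarrow> real) \<Rightarrow> nat \<Rightarrow> nat \<Rightarrow> real" where
  "sig P H n i = sigfun P H (fstar P H n) i"

definition Jcost :: "vpparams \<Rightarrow> (nat \<Rightarrow> real) \<Rightarrow> real" where
  "Jcost P H = dx P * dv P / 2 *
     (\<Sum>i<nx P. \<Sum>j<nv P. \<bar>fwd P H (Nt P) i j - feq P i j\<bar>^2)"

definition gss :: "vpparams \<Rightarrow> (nat \<Rightarrow> nat \<Rightarrow> real) \<Rightarrow> nat \<Rightarrow> nat \<Rightarrow> real" where
  "gss P gnext = xhalfT P gnext"

definition dvec :: "vpparams \<Rightarrow> (nat \<Rightarrow> real) \<Rightarrow> nat \<Rightarrow> (nat \<Rightarrow> nat \<Rightarrow> real) \<Rightarrow> nat \<Rightarrow> real" where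
  "dvec P H n gnext i = (\<Sum>j<nv P.
      dt P / dv P *
      (fstar P H n i (idx (nv P) (int j + \<lfloor>sig P H n i\<rfloor> + 1))
       - fstar P H n i (idx (nv P) (int j + \<lfloor>sig P H n i\<rfloor>)))
      * gss P gnext i j)"

definition gstar :: "vpparams \<Rightarrow> (nat \<Rightarrow> real) \<Rightarrow> nat \<Rightarrow> (nat \<Rightarrow> nat \<Rightarrow> real) \<Rightarrow> nat \<Rightarrow> nat \<Rightarrow> real" where
  "gstar P H n gnext k l =
     shiftST (nv P) (sig P H n k) (\<lambda>j. gss P gnext k j) l
     - wq P * (\<Sum>i<nx P. Cm P i k * dvec P H n gnext i)"

definition adjstep :: "vpparams \<Rightarrow> (nat \<Rightarrow> real) \<Rightarrow> nat \<Rightarrow> (nat \<Rightarrow> nat \<Rightarrow> real) \<Rightarrow> nat \<Rightarrow> nat \<Rightarrow> real" where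
  "adjstep P H n gnext = xhalfT P (gstar P H n gnext)"

text \<open>gback P H m = g^{N-m}.\<close>
primrec gback :: "vpparams \<Rightarrow> (nat \<Rightarrow> real) \<Rightarrow> nat \<Rightarrow> nat \<Rightarrow> nat \<Rightarrow> real" where
  "gback P H 0 = (\<lambda>i j. fwd P H (Nt P) i j - feq P i j)"
| "gback P H (Suc m) = adjstep P H (Nt P - Suc m) (gback P H m)"

definition gadj :: "vpparams \<Rightarrow> (nat \<Rightarrow> real) \<Rightarrow> nat \<Rightarrow> nat \<Rightarrow> nat \<Rightarrow> real" where
  "gadj P H n = gback P H (Nt P - n)"

definition dadj :: "vpparams \<Rightarrow> (nat \<Rightarrow> real) \<Rightarrow> nat \<Rightarrow> nat \<Rightarrow> real" where
  "dadj P H n i = dvec P H n (gadj P H (n + 1)) i"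

text \<open>Turning a vector H in R^{nx} (index type 'n) into a periodic-index function
  via an enumeration e of the index type onto {0..<nx}.\<close>
definition Hfun :: "('n \<Rightarrow> nat) \<Rightarrow> real^'n \<Rightarrow> nat \<Rightarrow> real" where
  "Hfun e H i = H $ (inv_into UNIV e i)"

end

theory Submission
  imports Defs
begin

lemma idx_less: "m \<ge> 1 \<Longrightarrow> idx m z < m"
  unfolding idx_def by (simp add: nat_less_iff)

lemma shiftS_Smat:
  assumes "m \<ge> 1"
  shows "shiftS m s u k = (\<Sum>l<m. Smat m s k l * u l)"
proof -
  have a: "idx m (int k + \<lfloor>s\<rfloor>) \<in> {..<m}" "idx m (int k + \<lfloor>s\<rfloor> + 1) \<in> {..<m}"
    using idx_less[OF assms] by auto
  have d: "(\<Sum>l<m. (if l = a then c else 0) * u l) = c * u a" if "a \<in> {..<m}" for a c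
  proof -
    have "(\<Sum>l<m. (if l = a then c else 0) * u l) = (\<Sum>l<m. if a = l then c * u a else 0)"
      by (intro sum.cong) auto
    also have "\<dots> = c * u a" using that by (simp add: sum.delta)
    finally show ?thesis .
  qed
  show ?thesis
    unfolding shiftS_def Smat_def
    by (simp only: distrib_right sum.distrib d[OF a(1)] d[OF a(2)])
qed

lemma shift_dual:
  assumes "m \<ge> 1"
  shows "(\<Sum>l<m. g l * shiftS m s u l) = (\<Sum>l<m. shiftST m s g l * u l)"
proof -
  have "(\<Sum>l<m. g l * shiftS m s u l) = (\<Sum>l<m. \<Sum>p<m. g l * (Smat m s l p * u p))"
    by (simp add: shiftS_Smat[OF assms] sum_distrib_left)
  also have "\<dots> = (\<Sum>p<m. \<Sum>l<m. g l * (Smat m s l p * u p))"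
    by (rule sum.swap)
  also have "\<dots> = (\<Sum>p<m. shiftST m s g p * u p)"
    by (simp add: shiftST_def sum_distrib_left mult_ac)
  finally show ?thesis .
qed

definition ip :: "vpparams \<Rightarrow> (nat \<Rightarrow> nat \<Rightarrow> real) \<Rightarrow> (nat \<Rightarrow> nat \<Rightarrow> real) \<Rightarrow> real" where
  "ip P a b = (\<Sum>i<nx P. \<Sum>j<nv P. a i j * b i j)"

lemma ip_xhalf:
  assumes "nx P \<ge> 1"
  shows "ip P g (xhalf P f) = ip P (xhalfT P g) f"
proof -
  have "ip P g (xhalf P f) = (\<Sum>j<nv P. \<Sum>i<nx P. g i j * xhalf P f i j)"
    unfolding ip_def by (rule sum.swap)
  also have "\<dots> = (\<Sum>j<nv P. \<Sum>i<nx P. xhalfT P g i j * f i j)"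
    unfolding xhalf_def xhalfT_def
    by (intro sum.cong refl shift_dual[OF assms])
  also have "\<dots> = ip P (xhalfT P g) f"
    unfolding ip_def by (rule sum.swap)
  finally show ?thesis .
qed

lemma shiftS_deriv:
  fixes s :: "'a::real_normed_vector \<Rightarrow> real" and u :: "'a \<Rightarrow> nat \<Rightarrow> real"
  assumes m: "m \<ge> 1" and ds: "(s has_derivative Ds) (at x)" and nz: "s x \<notin> \<int>"
    and du: "\<And>l. l < m \<Longrightarrow> ((\<lambda>y. u y l) has_derivative Du l) (at x)"
  shows "((\<lambda>y. shiftS m (s y) (u y) k) has_derivative
          (\<lambda>h. shiftS m (s x) (\<lambda>l. Du l h) k
               + Ds h * (u x (idx m (int k + \<lfloor>s x\<rfloor> + 1)) - u x (idx m (int k + \<lfloor>s x\<rfloor>))))) (at x)"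
proof -
  define a where "a = idx m (int k + \<lfloor>s x\<rfloor>)"
  define b where "b = idx m (int k + \<lfloor>s x\<rfloor> + 1)"
  define F where "F = real_of_int \<lfloor>s x\<rfloor>"
  have al: "a < m" "b < m" unfolding a_def b_def using idx_less[OF m] by auto
  let ?g = "\<lambda>y. (1 - (s y - F)) * u y a + (s y - F) * u y b"
  have "(?g has_derivative (\<lambda>h. (- Ds h) * u x a + (1 - (s x - F)) * Du a h
        + (Ds h * u x b + (s x - F) * Du b h))) (at x)"
    using ds du[OF al(1)] du[OF al(2)] by (auto intro!: derivative_eq_intros simp: algebra_simps)
  then have g: "(?g has_derivative (\<lambda>h. shiftS m (s x) (\<lambda>l. Du l h) k
               + Ds h * (u x b - u x a))) (at x)"
    by (rule has_derivative_eq_rhs)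
       (auto simp: shiftS_def a_def b_def F_def frac_def algebra_simps)
  have cont: "(s \<longlongrightarrow> s x) (at x)"
    using has_derivative_continuous[OF ds] by (simp add: continuous_at)
  have ev: "\<forall>\<^sub>F y in at x. \<lfloor>s y\<rfloor> = \<lfloor>s x\<rfloor>"
    by (rule eventually_floor_eq[OF cont nz])
  have ev2: "\<forall>\<^sub>F y in at x. ?g y = shiftS m (s y) (u y) k"
    using ev by eventually_elim (auto simp: shiftS_def a_def b_def F_def frac_def)
  show ?thesis unfolding a_def[symmetric] b_def[symmetric]
    by (rule has_derivative_transform_eventually[OF g ev2])
       (auto simp: shiftS_def a_def b_def F_def frac_def)
qed

lemma shiftS_deriv_const:
  fixes u :: "'a::real_normed_vector \<Rightarrow> nat \<Rightarrow> real"
  assumes m: "m \<ge> 1"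
    and du: "\<And>l. l < m \<Longrightarrow> ((\<lambda>y. u y l) has_derivative Du l) (at x)"
  shows "((\<lambda>y. shiftS m s (u y) k) has_derivative (\<lambda>h. shiftS m s (\<lambda>l. Du l h) k)) (at x)"
  unfolding shiftS_def
  using du[OF idx_less[OF m]] by (auto intro!: derivative_eq_intros)

lemma Hfun_deriv: "((\<lambda>y. Hfun e y i) has_derivative (\<lambda>h. Hfun e h i)) (at x)"
  unfolding Hfun_def by (rule bounded_linear_imp_has_derivative) (rule bounded_linear_vec_nth)

definition dEf :: "vpparams \<Rightarrow> (nat \<Rightarrow> nat \<Rightarrow> real) \<Rightarrow> nat \<Rightarrow> real" where
  "dEf P df i = (\<Sum>k<nx P. Cm P i k * (- (wq P * (\<Sum>j<nv P. df k j))))"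

lemma sigfun_deriv:
  fixes F :: "real^'n \<Rightarrow> nat \<Rightarrow> nat \<Rightarrow> real"
  assumes dF: "\<And>k j. k < nx P \<Longrightarrow> j < nv P \<Longrightarrow> ((\<lambda>y. F y k j) has_derivative (\<lambda>h. DF h k j)) (at x)"
    and dv0: "dv P \<noteq> 0"
  shows "((\<lambda>y. sigfun P (Hfun e y) (F y) i) has_derivative
     (\<lambda>h. (dEf P (DF h) i + Hfun e h i) * dt P / dv P)) (at x)"
  unfolding sigfun_def Efield_def rho_def
  by (auto intro!: derivative_eq_intros dF Hfun_deriv simp: dEf_def sum_negf dv0)

definition vtan :: "vpparams \<Rightarrow> (nat \<Rightarrow> real) \<Rightarrow> (nat \<Rightarrow> real) \<Rightarrow> (nat \<Rightarrow> nat \<Rightarrow> real)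
   \<Rightarrow> (nat \<Rightarrow> nat \<Rightarrow> real) \<Rightarrow> nat \<Rightarrow> nat \<Rightarrow> real" where
  "vtan P H hf f df i l = shiftS (nv P) (sigfun P H f i) (\<lambda>l. df i l) l
     + (dEf P df i + hf i) * dt P / dv P *
       (f i (idx (nv P) (int l + \<lfloor>sigfun P H f i\<rfloor> + 1)) - f i (idx (nv P) (int l + \<lfloor>sigfun P H f i\<rfloor>)))"

primrec tan :: "vpparams \<Rightarrow> (nat \<Rightarrow> real) \<Rightarrow> (nat \<Rightarrow> real) \<Rightarrow> nat \<Rightarrow> nat \<Rightarrow> nat \<Rightarrow> real" where
  "tan P H hf 0 = (\<lambda>i j. 0)"
| "tan P H hf (Suc n) = xhalf P (vtan P H hf (fstar P H n) (xhalf P (tan P H hf n)))"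

lemma vstep_deriv:
  fixes F :: "real^'n \<Rightarrow> nat \<Rightarrow> nat \<Rightarrow> real"
  assumes dF: "\<And>k j. k < nx P \<Longrightarrow> j < nv P \<Longrightarrow> ((\<lambda>y. F y k j) has_derivative (\<lambda>h. DF h k j)) (at x)"
    and dv0: "dv P \<noteq> 0" and nv1: "nv P \<ge> 1" and i: "i < nx P"
    and nz: "sigfun P (Hfun e x) (F x) i \<notin> \<int>"
  shows "((\<lambda>y. vstep P (Hfun e y) (F y) i j) has_derivative
     (\<lambda>h. vtan P (Hfun e x) (Hfun e h) (F x) (DF h) i j)) (at x)"
proof -
  have "((\<lambda>y. shiftS (nv P) (sigfun P (Hfun e y) (F y) i) (\<lambda>l. F y i l) j) has_derivative
     (\<lambda>h. shiftS (nv P) (sigfun P (Hfun e x) (F x) i) (\<lambda>l. (\<lambda>l h. DF h i l) l h) j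
       + (dEf P (DF h) i + Hfun e h i) * dt P / dv P *
       (F x i (idx (nv P) (int j + \<lfloor>sigfun P (Hfun e x) (F x) i\<rfloor> + 1))
        - F x i (idx (nv P) (int j + \<lfloor>sigfun P (Hfun e x) (F x) i\<rfloor>))))) (at x)"
    by (rule shiftS_deriv[OF nv1 sigfun_deriv[OF dF dv0] nz, where u="\<lambda>y l. F y i l" and Du="\<lambda>l h. DF h i l"])
       (auto intro: dF i)
  then show ?thesis by (simp add: vstep_def vtan_def)
qed

lemma xhalf_deriv:
  fixes F :: "real^'n \<Rightarrow> nat \<Rightarrow> nat \<Rightarrow> real"
  assumes dF: "\<And>k. k < nx P \<Longrightarrow> ((\<lambda>y. F y k j) has_derivative (\<lambda>h. DF h k j)) (at x)"
    and nx1: "nx P \<ge> 1"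
  shows "((\<lambda>y. xhalf P (F y) i j) has_derivative (\<lambda>h. xhalf P (DF h) i j)) (at x)"
proof -
  have "((\<lambda>y. shiftS (nx P) (xshift P j) (\<lambda>k. F y k j) i) has_derivative
      (\<lambda>h. shiftS (nx P) (xshift P j) (\<lambda>l. (\<lambda>l h. DF h l j) l h) i)) (at x)"
    by (rule shiftS_deriv_const[OF nx1, where u="\<lambda>y k. F y k j" and Du="\<lambda>l h. DF h l j"]) (rule dF)
  then show ?thesis by (simp add: xhalf_def)
qed

lemma fwd_deriv:
  fixes x :: "real^'n" and e :: "'n \<Rightarrow> nat"
  assumes nx1: "nx P \<ge> 1" and nv1: "nv P \<ge> 1" and dv0: "dv P \<noteq> 0"
    and nz: "\<forall>n<Nt P. \<forall>i<nx P. sig P (Hfun e x) n i \<notin> \<int>"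
  shows "n \<le> Nt P \<Longrightarrow> i < nx P \<Longrightarrow>
    ((\<lambda>y. fwd P (Hfun e y) n i j) has_derivative (\<lambda>h. tan P (Hfun e x) (Hfun e h) n i j)) (at x)"
proof (induction n arbitrary: i j)
  case 0
  then show ?case by simp
next
  case (Suc n)
  have fs: "((\<lambda>y. xhalf P (fwd P (Hfun e y) n) k j) has_derivative
     (\<lambda>h. xhalf P (tan P (Hfun e x) (Hfun e h) n) k j)) (at x)" for k j
    by (rule xhalf_deriv[OF _ nx1]) (rule Suc.IH, use Suc.prems in auto)
  have vs: "((\<lambda>y. vstep P (Hfun e y) (xhalf P (fwd P (Hfun e y) n)) k j) has_derivative
     (\<lambda>h. vtan P (Hfun e x) (Hfun e h) (xhalf P (fwd P (Hfun e x) n))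
        (xhalf P (tan P (Hfun e x) (Hfun e h) n)) k j)) (at x)" if k: "k < nx P" for k j
  proof (rule vstep_deriv[OF _ dv0 nv1 k])
    show "\<And>k j. ((\<lambda>y. xhalf P (fwd P (Hfun e y) n) k j) has_derivative
     (\<lambda>h. xhalf P (tan P (Hfun e x) (Hfun e h) n) k j)) (at x)" by (rule fs)
    show "sigfun P (Hfun e x) (xhalf P (fwd P (Hfun e x) n)) k \<notin> \<int>"
      using nz Suc.prems k by (simp add: sig_def fstar_def)
  qed
  have "((\<lambda>y. xhalf P (vstep P (Hfun e y) (xhalf P (fwd P (Hfun e y) n))) i j) has_derivative
     (\<lambda>h. xhalf P (vtan P (Hfun e x) (Hfun e h) (xhalf P (fwd P (Hfun e x) n))
        (xhalf P (tan P (Hfun e x) (Hfun e h) n))) i j)) (at x)"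
    by (rule xhalf_deriv[OF _ nx1]) (rule vs, assumption)
  then show ?case by (simp add: fstar_def)
qed

lemma dEf_swap:
  "(\<Sum>i<nx P. dEf P df i * d i) = - (\<Sum>k<nx P. \<Sum>l<nv P. wq P * (\<Sum>i<nx P. Cm P i k * d i) * df k l)"
proof -
  have "(\<Sum>i<nx P. dEf P df i * d i) = - (\<Sum>i<nx P. \<Sum>k<nx P. Cm P i k * d i * wq P * (\<Sum>l<nv P. df k l))"
    unfolding dEf_def by (simp add: sum_distrib_right sum_distrib_left sum_negf mult_ac)
  also have "\<dots> = - (\<Sum>k<nx P. \<Sum>i<nx P. Cm P i k * d i * wq P * (\<Sum>l<nv P. df k l))"
    by (subst sum.swap) simp
  also have "\<dots> = - (\<Sum>k<nx P. \<Sum>l<nv P. wq P * (\<Sum>i<nx P. Cm P i k * d i) * df k l)"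
    apply (simp add: sum_distrib_left sum_distrib_right mult_ac)
    apply (rule sum.cong[OF refl])
    apply (rule sum.swap)
    done
  finally show ?thesis .
qed

lemma step_dual:
  assumes nx1: "nx P \<ge> 1" and nv1: "nv P \<ge> 1"
  shows "ip P gnext (tan P H hf (Suc n))
     = ip P (adjstep P H n gnext) (tan P H hf n) + (\<Sum>i<nx P. hf i * dvec P H n gnext i)"
proof -
  define df where "df = xhalf P (tan P H hf n)"
  define f where "f = fstar P H n"
  define G where "G = gss P gnext"
  define D where "D = (\<lambda>i l. f i (idx (nv P) (int l + \<lfloor>sig P H n i\<rfloor> + 1)) - f i (idx (nv P) (int l + \<lfloor>sig P H n i\<rfloor>)))"
  define dd where "dd = dvec P H n gnext"
  have dd: "dd i = (\<Sum>l<nv P. dt P / dv P * D i l * G i l)" for i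
    unfolding dd_def dvec_def D_def f_def G_def ..
  have V: "vtan P H hf f df i l = shiftS (nv P) (sig P H n i) (\<lambda>l. df i l) l
      + (dEf P df i + hf i) * dt P / dv P * D i l" for i l
    unfolding vtan_def D_def sig_def f_def ..
  have s1: "ip P gnext (tan P H hf (Suc n)) = ip P G (vtan P H hf f df)"
    by (simp add: ip_xhalf[OF nx1] G_def gss_def f_def df_def)
  have s2: "ip P G (vtan P H hf f df) = (\<Sum>i<nx P. \<Sum>l<nv P. G i l * shiftS (nv P) (sig P H n i) (\<lambda>l. df i l) l)
     + (\<Sum>i<nx P. (dEf P df i + hf i) * dd i)"
  proof -
    have "(\<Sum>l<nv P. G i l * vtan P H hf f df i l)
       = (\<Sum>l<nv P. G i l * shiftS (nv P) (sig P H n i) (\<lambda>l. df i l) l) + (dEf P df i + hf i) * dd i" for i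
    proof -
      have "(\<Sum>l<nv P. G i l * vtan P H hf f df i l)
         = (\<Sum>l<nv P. G i l * shiftS (nv P) (sig P H n i) (\<lambda>l. df i l) l
             + (dEf P df i + hf i) * (dt P / dv P * D i l * G i l))"
        unfolding V by (intro sum.cong refl) (simp add: algebra_simps)
      also have "\<dots> = (\<Sum>l<nv P. G i l * shiftS (nv P) (sig P H n i) (\<lambda>l. df i l) l) + (dEf P df i + hf i) * dd i"
        unfolding dd sum.distrib sum_distrib_left ..
      finally show ?thesis .
    qed
    then show ?thesis unfolding ip_def by (simp add: sum.distrib)
  qed
  have s3: "(\<Sum>i<nx P. \<Sum>l<nv P. G i l * shiftS (nv P) (sig P H n i) (\<lambda>l. df i l) l)
     = (\<Sum>i<nx P. \<Sum>l<nv P. shiftST (nv P) (sig P H n i) (\<lambda>j. G i j) l * df i l)"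
    by (intro sum.cong refl shift_dual[OF nv1])
  have s4: "(\<Sum>i<nx P. (dEf P df i + hf i) * dd i)
     = (\<Sum>i<nx P. dEf P df i * dd i) + (\<Sum>i<nx P. hf i * dd i)"
    by (simp add: distrib_right sum.distrib)
  have s5: "(\<Sum>i<nx P. dEf P df i * dd i)
      = - (\<Sum>k<nx P. \<Sum>l<nv P. wq P * (\<Sum>i<nx P. Cm P i k * dd i) * df k l)"
    by (rule dEf_swap)
  have s6: "(\<Sum>i<nx P. \<Sum>l<nv P. shiftST (nv P) (sig P H n i) (\<lambda>j. G i j) l * df i l)
      + (- (\<Sum>k<nx P. \<Sum>l<nv P. wq P * (\<Sum>i<nx P. Cm P i k * dd i) * df k l))
      = ip P (gstar P H n gnext) df"
  proof -
    have "(\<Sum>l<nv P. gstar P H n gnext k l * df k l)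
      = (\<Sum>l<nv P. shiftST (nv P) (sig P H n k) (\<lambda>j. G k j) l * df k l)
        - (\<Sum>l<nv P. wq P * (\<Sum>i<nx P. Cm P i k * dd i) * df k l)" for k
      unfolding gstar_def G_def dd_def left_diff_distrib sum_subtractf ..
    note gk = this
    have "ip P (gstar P H n gnext) df = (\<Sum>k<nx P. (\<Sum>l<nv P. shiftST (nv P) (sig P H n k) (\<lambda>j. G k j) l * df k l)
        - (\<Sum>l<nv P. wq P * (\<Sum>i<nx P. Cm P i k * dd i) * df k l))"
      unfolding ip_def by (rule sum.cong[OF refl gk])
    then show ?thesis by (simp only: sum_subtractf)
  qed
  have s7: "ip P (gstar P H n gnext) df = ip P (adjstep P H n gnext) (tan P H hf n)"
    by (simp add: ip_xhalf[OF nx1] adjstep_def df_def)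
  show ?thesis unfolding dd_def[symmetric] using s1 s2 s3 s4 s5 s6 s7 by linarith
qed

lemma gadj_step: "n < Nt P \<Longrightarrow> gadj P H n = adjstep P H n (gadj P H (Suc n))"
proof -
  assume n: "n < Nt P"
  have e: "Nt P - n = Suc (Nt P - Suc n)" using n by simp
  have e2: "Nt P - Suc (Nt P - Suc n) = n" using n by simp
  show ?thesis unfolding gadj_def e by (simp add: e2)
qed

lemma telescope:
  assumes nx1: "nx P \<ge> 1" and nv1: "nv P \<ge> 1"
  shows "m \<le> Nt P \<Longrightarrow> ip P (gadj P H m) (tan P H hf m) = (\<Sum>n<m. \<Sum>i<nx P. hf i * dadj P H n i)"
proof (induction m)
  case 0
  then show ?case by (simp add: ip_def)
next
  case (Suc m)
  have "ip P (gadj P H (Suc m)) (tan P H hf (Suc m))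
     = ip P (adjstep P H m (gadj P H (Suc m))) (tan P H hf m) + (\<Sum>i<nx P. hf i * dvec P H m (gadj P H (Suc m)) i)"
    by (rule step_dual[OF nx1 nv1])
  also have "\<dots> = ip P (gadj P H m) (tan P H hf m) + (\<Sum>i<nx P. hf i * dadj P H m i)"
    using Suc.prems by (simp add: gadj_step[symmetric] dadj_def)
  finally show ?case using Suc by simp
qed

theorem mainTheorem3:
  fixes P :: vpparams and e :: "'n::finite \<Rightarrow> nat" and H :: "real^'n"
  assumes "nx P \<ge> 1" "nv P \<ge> 1" "Nt P \<ge> 1"
    and "dt P > 0" "dx P > 0" "dv P > 0" "wq P > 0"
    and "CARD('n) = nx P" "bij_betw e UNIV {..<nx P}"
    and "\<forall>n<Nt P. \<forall>i<nx P. sig P (Hfun e H) n i \<notin> \<int>"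
  shows "\<exists>L. ((\<lambda>H'. Jcost P (Hfun e H')) has_derivative L) (at H) \<and>
           (\<forall>i<nx P. L (axis (inv_into UNIV e i) 1)
              = dx P * dv P * (\<Sum>n<Nt P. dadj P (Hfun e H) n i))"
proof -
  note nx1 = assms(1) and nv1 = assms(2)
  have dv0: "dv P \<noteq> 0" using assms(6) by simp
  define Hx where "Hx = Hfun e H"
  have fd: "((\<lambda>y. fwd P (Hfun e y) (Nt P) i j) has_derivative (\<lambda>h. tan P Hx (Hfun e h) (Nt P) i j)) (at H)"
    if "i < nx P" for i j
    unfolding Hx_def by (rule fwd_deriv[OF nx1 nv1 dv0 assms(10) order.refl that])
  define L where "L = (\<lambda>h. dx P * dv P * ip P (gadj P Hx (Nt P)) (tan P Hx (Hfun e h) (Nt P)))"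
  have sq: "((\<lambda>y. (fwd P (Hfun e y) (Nt P) i j - feq P i j) * (fwd P (Hfun e y) (Nt P) i j - feq P i j))
     has_derivative (\<lambda>h. 2 * (gadj P Hx (Nt P) i j * tan P Hx (Hfun e h) (Nt P) i j))) (at H)"
    if "i < nx P" for i j
  proof (rule has_derivative_eq_rhs)
    show "((\<lambda>y. (fwd P (Hfun e y) (Nt P) i j - feq P i j) * (fwd P (Hfun e y) (Nt P) i j - feq P i j))
     has_derivative (\<lambda>h. (fwd P Hx (Nt P) i j - feq P i j) * (tan P Hx (Hfun e h) (Nt P) i j - 0)
        + (tan P Hx (Hfun e h) (Nt P) i j - 0) * (fwd P Hx (Nt P) i j - feq P i j))) (at H)"
      unfolding Hx_def
      by (intro has_derivative_mult has_derivative_diff has_derivative_const fd[OF that, unfolded Hx_def])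
  qed (simp add: gadj_def algebra_simps)
  have dJ: "((\<lambda>y. Jcost P (Hfun e y)) has_derivative L) (at H)"
  proof (rule has_derivative_eq_rhs)
    show "((\<lambda>y. Jcost P (Hfun e y)) has_derivative
        (\<lambda>h. dx P * dv P / 2 * (\<Sum>i<nx P. \<Sum>j<nv P. 2 * (gadj P Hx (Nt P) i j * tan P Hx (Hfun e h) (Nt P) i j)))) (at H)"
      unfolding Jcost_def power2_abs power2_eq_square
      by (intro has_derivative_mult_right has_derivative_sum) (auto intro: sq)
    show "(\<lambda>h. dx P * dv P / 2 * (\<Sum>i<nx P. \<Sum>j<nv P. 2 * (gadj P Hx (Nt P) i j * tan P Hx (Hfun e h) (Nt P) i j))) = L"
      by (simp add: L_def ip_def sum_distrib_left[symmetric] mult.assoc)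
  qed
  have Lax: "L (axis (inv_into UNIV e i) 1) = dx P * dv P * (\<Sum>n<Nt P. dadj P Hx n i)" if i: "i < nx P" for i
  proof -
    have hf: "Hfun e (axis (inv_into UNIV e i) 1) k = (if k = i then 1 else 0)" if k: "k < nx P" for k
    proof -
      have ek: "e (inv_into UNIV e k) = k" and ei: "e (inv_into UNIV e i) = i"
        using assms(9) k i by (auto simp: bij_betw_def intro!: f_inv_into_f)
      have ax: "axis c (1::real) $ d = (if d = c then 1 else 0)" for c d
        unfolding axis_def by simp
      show ?thesis
      proof (cases "k = i")
        case True then show ?thesis by (simp add: Hfun_def)
      next
        case False
        then have "inv_into UNIV e k \<noteq> inv_into UNIV e i" using ek ei by metis
        then show ?thesis using False by (simp add: Hfun_def ax)
      qed
    qed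
    have "(\<Sum>n<Nt P. \<Sum>k<nx P. Hfun e (axis (inv_into UNIV e i) 1) k * dadj P Hx n k)
        = (\<Sum>n<Nt P. dadj P Hx n i)"
    proof (intro sum.cong refl)
      fix n assume "n \<in> {..<Nt P}"
      have "(\<Sum>k<nx P. Hfun e (axis (inv_into UNIV e i) 1) k * dadj P Hx n k)
          = (\<Sum>k<nx P. if i = k then dadj P Hx n k else 0)"
        by (intro sum.cong refl) (simp add: hf)
      also have "\<dots> = dadj P Hx n i" using i by (simp add: sum.delta)
      finally show "(\<Sum>k<nx P. Hfun e (axis (inv_into UNIV e i) 1) k * dadj P Hx n k) = dadj P Hx n i" .
    qed
    then show ?thesis
      unfolding L_def telescope[OF nx1 nv1 order.refl] by simp
  qed
  show ?thesis using dJ Lax unfolding Hx_def by blast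
qed

end
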